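(* Let $\mathbf K\in\mathbb R^{n\times d}$ have rows $\mathbf k_1,\dots,\mathbf k_n$, $\beta>0$, $\mathbf H=(\exp(\beta\langle\mathbf k_i,\mathbf k_l\rangle))_{i,l}$, and for $s\in\{0,1,2,\dots\}$ let $\mathbf T^s$ be the order-$s$ Taylor approximation with entries $\mathbf T^s_{il}=\sum_{|\alpha|\le s}\phi_\alpha(\mathbf k_i)\phi_\alpha(\mathbf k_l)$, where for a multi-index $\alpha\in\mathbb N_0^d$, $\phi_\alpha(\mathbf k)=\sqrt{\frac{1}{|\alpha|!}\binom{|\alpha|}{\alpha}\beta^{|\alpha|}}\,\mathbf k^\alpha$. Then $\mathrm{rank}(\mathbf T^s)\le\binom{s+d}{d}$, $\mathbf T^s\preceq\mathbf H$, and $$\|\mathbf H-\mathbf T^s\|_*\le n\exp(\beta\|\mathbf K\|_{2,\infty}^2)\left(\frac{e\beta\|\mathbf K\|_{2,\infty}^2}{s+1}\right)^{s+1}.$$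
   Context: Multi-index notation: $|\alpha|=\alpha_1+\dots+\alpha_d$, $\binom{s}{\alpha}=\frac{s!}{\alpha_1!\cdots\alpha_d!}$, $\mathbf k^\alpha=\prod_j\mathbf k_j^{\alpha_j}$. Equivalently $\mathbf T^s_{il}=\sum_{p=0}^s\frac1{p!}(\beta\langle\mathbf k_i,\mathbf k_l\rangle)^p$. $\|\mathbf K\|_{2,\infty}$ is the maximal Euclidean row norm, $\|\cdot\|_*$ the nuclear norm, $\preceq$ the Loewner order. *)

theory Defs
  imports "Jordan_Normal_Form.Jordan_Normal_Form" "Jordan_Normal_Form.DL_Rank"
begin

text \<open>Multi-indices alpha in N_0^d with |alpha| <= s, represented as functions nat => nat
  vanishing outside {..<d}.\<close>
definition multi_indices :: "nat \<Rightarrow> nat \<Rightarrow> (nat \<Rightarrow> nat) set" where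
  "multi_indices d s = {\<alpha>. (\<forall>j\<ge>d. \<alpha> j = 0) \<and> (\<Sum>j<d. \<alpha> j) \<le> s}"

definition mi_abs :: "nat \<Rightarrow> (nat \<Rightarrow> nat) \<Rightarrow> nat" where
  "mi_abs d \<alpha> = (\<Sum>j<d. \<alpha> j)"

definition multinom :: "nat \<Rightarrow> (nat \<Rightarrow> nat) \<Rightarrow> real" where
  "multinom d \<alpha> = fact (mi_abs d \<alpha>) / (\<Prod>j<d. fact (\<alpha> j))"

definition phi :: "real \<Rightarrow> nat \<Rightarrow> (nat \<Rightarrow> nat) \<Rightarrow> real vec \<Rightarrow> real" where
  "phi \<beta> d \<alpha> k = sqrt (1 / fact (mi_abs d \<alpha>) * multinom d \<alpha> * \<beta> ^ mi_abs d \<alpha>)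
                   * (\<Prod>j<d. (k $ j) ^ \<alpha> j)"

definition exp_kernel :: "real \<Rightarrow> real mat \<Rightarrow> real mat" where
  "exp_kernel \<beta> K = mat (dim_row K) (dim_row K) (\<lambda>(i,l). exp (\<beta> * (row K i \<bullet> row K l)))"

definition taylor_kernel :: "real \<Rightarrow> nat \<Rightarrow> real mat \<Rightarrow> real mat" where
  "taylor_kernel \<beta> s K = mat (dim_row K) (dim_row K)
     (\<lambda>(i,l). \<Sum>\<alpha>\<in>multi_indices (dim_col K) s.
                 phi \<beta> (dim_col K) \<alpha> (row K i) * phi \<beta> (dim_col K) \<alpha> (row K l))"

definition norm_2_inf :: "real mat \<Rightarrow> real" where
  "norm_2_inf K = Max (insert 0 ((\<lambda>i. sqrt (\<Sum>j<dim_col K. (K $$ (i,j))^2)) ` {..<dim_row K}))"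

definition loewner_le :: "real mat \<Rightarrow> real mat \<Rightarrow> bool" where
  "loewner_le A B \<longleftrightarrow> (\<exists>n. A \<in> carrier_mat n n \<and> B \<in> carrier_mat n n \<and>
      (\<forall>x\<in>carrier_vec n. 0 \<le> x \<bullet> (mult_mat_vec (B - A) x)))"

text \<open>nuclear norm: sum of the singular values, i.e. of the square roots of the eigenvalues
  of A^T A, counted with (algebraic) multiplicity\<close>
definition nuclear_norm :: "real mat \<Rightarrow> real" where
  "nuclear_norm A = (let M = transpose_mat A * A in
     \<Sum>a\<in>{a. eigenvalue M a}. real (Polynomial.order a (char_poly M)) * sqrt a)"

definition mat_rank :: "real mat \<Rightarrow> nat" where
  "mat_rank A = vec_space.rank (dim_row A) A"

end

theory Submission
  imports Defs "Jordan_Normal_Form.Schur_Decomposition"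
begin


lemma mi_zero: "multi_indices 0 s = {\<lambda>_. 0}"
  unfolding multi_indices_def by auto

lemma mi_Suc: "multi_indices (Suc d) s =
   (\<lambda>(a,\<alpha>). \<alpha>(d:=a)) ` (SIGMA a:{..s}. multi_indices d (s-a))"
proof (rule equalityI; rule subsetI)
  fix \<beta> assume b: "\<beta> \<in> multi_indices (Suc d) s"
  let ?a = "\<beta> d" let ?\<alpha> = "\<beta>(d:=0)"
  have s1: "(\<Sum>j<d. ?\<alpha> j) = (\<Sum>j<d. \<beta> j)" by (intro sum.cong) auto
  from b have "(\<Sum>j<d. \<beta> j) + \<beta> d \<le> s" unfolding multi_indices_def by auto
  with b have "?\<alpha> \<in> multi_indices d (s - ?a)" unfolding multi_indices_def using s1 by auto
  moreover have "?a \<le> s" using \<open>(\<Sum>j<d. \<beta> j) + \<beta> d \<le> s\<close> by auto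
  moreover have "\<beta> = ?\<alpha>(d := ?a)" by auto
  ultimately show "\<beta> \<in> (\<lambda>(a,\<alpha>). \<alpha>(d:=a)) ` (SIGMA a:{..s}. multi_indices d (s-a))"
    by (intro image_eqI[where x="(?a, ?\<alpha>)"]) auto
next
  fix \<beta> assume "\<beta> \<in> (\<lambda>(a,\<alpha>). \<alpha>(d:=a)) ` (SIGMA a:{..s}. multi_indices d (s-a))"
  then obtain a \<alpha> where a: "a \<le> s" and al: "\<alpha> \<in> multi_indices d (s-a)" and be: "\<beta> = \<alpha>(d:=a)" by auto
  have s1: "(\<Sum>j<d. \<beta> j) = (\<Sum>j<d. \<alpha> j)" unfolding be by (intro sum.cong) auto
  show "\<beta> \<in> multi_indices (Suc d) s" using a al s1 unfolding multi_indices_def be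
    by auto
qed

lemma mi_inj: "inj_on (\<lambda>(a,\<alpha>). \<alpha>(d:=a)) (SIGMA a:{..s}. multi_indices d (s-a))"
proof (rule inj_onI, clarify)
  fix a \<alpha> b \<gamma>
  assume "\<alpha> \<in> multi_indices d (s - a)" "\<gamma> \<in> multi_indices d (s - b)" and e: "\<alpha>(d := a) = \<gamma>(d := b)"
  then have z: "\<alpha> d = 0" "\<gamma> d = 0" unfolding multi_indices_def by auto
  from fun_cong[OF e, of d] have "a = b" by simp
  moreover have "\<alpha> = \<gamma>"
  proof
    fix j show "\<alpha> j = \<gamma> j" using fun_cong[OF e, of j] z by (cases "j = d") auto
  qed
  ultimately show "a = b \<and> \<alpha> = \<gamma>" by simp
qed

lemma mi_finite: "finite (multi_indices d s)"
proof (induction d arbitrary: s)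
  case 0 then show ?case by (simp add: mi_zero)
next
  case (Suc d) then show ?case by (simp add: mi_Suc)
qed

lemma mi_sum_Suc: "(\<Sum>\<alpha>\<in>multi_indices (Suc d) s. f \<alpha>) =
   (\<Sum>a\<le>s. \<Sum>\<alpha>\<in>multi_indices d (s-a). f (\<alpha>(d:=a)))"
  unfolding mi_Suc
  by (subst sum.reindex[OF mi_inj]) (auto simp: sum.Sigma mi_finite split_def)

lemma choose_swap: "(a + b) choose b = (a + b) choose (a::nat)"
proof -
  have "(a + b) choose b = (a + b) choose (a + b - b)" by (rule binomial_symmetric) simp
  then show ?thesis by simp
qed

lemma mi_card: "card (multi_indices d s) = (s + d) choose d"
proof (induction d arbitrary: s)
  case 0 then show ?case by (simp add: mi_zero)
next
  case (Suc d)
  have "card (multi_indices (Suc d) s) = (\<Sum>a\<le>s. card (multi_indices d (s-a)))"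
    unfolding mi_Suc by (subst card_image[OF mi_inj]) (simp add: card_SigmaI mi_finite)
  also have "\<dots> = (\<Sum>a\<le>s. (d + (s - a)) choose (s - a))"
    using Suc by (intro sum.cong refl) (metis choose_swap add.commute)
  also have "\<dots> = (\<Sum>k\<le>s. (d + k) choose k)"
    by (rule sum.reindex_bij_witness[where i="\<lambda>k. s - k" and j="\<lambda>k. s - k"]) auto
  also have "\<dots> = Suc (d + s) choose s" by (rule sum_choose_lower)
  also have "\<dots> = (s + Suc d) choose Suc d"
    using choose_swap[of s "Suc d"] by (simp add: add.commute)
  finally show ?case .
qed

lemma trunc_exp_conv:
  fixes u Y :: real
  shows "(\<Sum>a\<le>s. u^a / fact a * (\<Sum>q\<le>s-a. Y^q / fact q)) = (\<Sum>p\<le>s. (u+Y)^p / fact p)"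
proof -
  have "(\<Sum>p\<le>s. (u+Y)^p / fact p) = (\<Sum>p\<le>s. \<Sum>a\<le>p. u^a / fact a * (Y^(p-a) / fact (p-a)))"
  proof (intro sum.cong refl)
    fix p assume "p \<in> {..s}"
    have "(u+Y)^p / fact p = (\<Sum>a\<le>p. of_nat (p choose a) * u^a * Y^(p-a)) / fact p"
      by (simp add: binomial_ring)
    also have "\<dots> = (\<Sum>a\<le>p. of_nat (p choose a) * u^a * Y^(p-a) / fact p)"
      by (simp add: sum_divide_distrib)
    also have "\<dots> = (\<Sum>a\<le>p. u^a / fact a * (Y^(p-a) / fact (p-a)))"
      by (intro sum.cong refl) (simp add: binomial_fact field_simps)
    finally show "(u+Y)^p / fact p = \<dots>" .
  qed
  also have "\<dots> = (\<Sum>(a,q)\<in>{(a,q). a+q \<le> s}. u^a / fact a * (Y^q / fact q))"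
    by (rule sum.triangle_reindex_eq[symmetric])
  also have "\<dots> = (\<Sum>a\<le>s. \<Sum>q\<le>s-a. u^a / fact a * (Y^q / fact q))"
    by (auto simp: pairs_le_eq_Sigma sum.Sigma)
  finally show ?thesis by (simp add: sum_distrib_left)
qed

lemma taylor_mi:
  fixes y :: "nat \<Rightarrow> real"
  shows "(\<Sum>\<alpha>\<in>multi_indices d s. \<Prod>j<d. y j ^ \<alpha> j / fact (\<alpha> j)) = (\<Sum>p\<le>s. (\<Sum>j<d. y j)^p / fact p)"
proof (induction d arbitrary: s)
  case 0 then show ?case by (simp add: mi_zero, induction s, simp_all)
next
  case (Suc d)
  have "(\<Sum>\<alpha>\<in>multi_indices (Suc d) s. \<Prod>j<Suc d. y j ^ \<alpha> j / fact (\<alpha> j))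
     = (\<Sum>a\<le>s. \<Sum>\<alpha>\<in>multi_indices d (s-a). y d ^ a / fact a * (\<Prod>j<d. y j ^ \<alpha> j / fact (\<alpha> j)))"
    unfolding mi_sum_Suc
  proof (intro sum.cong refl)
    fix a \<alpha> show "(\<Prod>j<Suc d. y j ^ (\<alpha>(d:=a)) j / fact ((\<alpha>(d:=a)) j)) =
       y d ^ a / fact a * (\<Prod>j<d. y j ^ \<alpha> j / fact (\<alpha> j))"
      by (simp add: prod.lessThan_Suc mult.commute)
  qed
  also have "\<dots> = (\<Sum>a\<le>s. y d ^ a / fact a * (\<Sum>q\<le>s-a. (\<Sum>j<d. y j)^q / fact q))"
    by (simp only: sum_distrib_left[symmetric] Suc.IH)
  also have "\<dots> = (\<Sum>p\<le>s. (y d + (\<Sum>j<d. y j))^p / fact p)" by (rule trunc_exp_conv)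
  finally show ?case by (simp add: add.commute)
qed



lemma rank_sum_rank1:
  fixes f :: "'b \<Rightarrow> nat \<Rightarrow> real"
  assumes "finite S"
  shows "vec_space.rank n (mat n n (\<lambda>(i,l). \<Sum>\<alpha>\<in>S. f \<alpha> i * f \<alpha> l)) \<le> card S"
  using assms
proof (induction S rule: finite_induct)
  case empty
  have "mat n n (\<lambda>(i,l). \<Sum>\<alpha>\<in>{}. f \<alpha> i * f \<alpha> l) = (0\<^sub>m n n :: real mat)"
    by (intro eq_matI) auto
  then show ?case by (metis vec_space.rank_0I card.empty order_refl)
next
  case (insert a S)
  have e: "mat n n (\<lambda>(i,l). \<Sum>\<alpha>\<in>insert a S. f \<alpha> i * f \<alpha> l) =
     mat n n (\<lambda>(i,l). f a i * f a l) + mat n n (\<lambda>(i,l). \<Sum>\<alpha>\<in>S. f \<alpha> i * f \<alpha> l)"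
    using insert by (intro eq_matI) auto
  have r1: "vec_space.rank n (mat n n (\<lambda>(i,l). f a i * f a l)) \<le> 1"
    by (rule vec_space.rank_le_1_product_entries[of _ n n "f a" "f a"]) auto
  have "vec_space.rank n (mat n n (\<lambda>(i,l). \<Sum>\<alpha>\<in>insert a S. f \<alpha> i * f \<alpha> l)) \<le>
     vec_space.rank n (mat n n (\<lambda>(i,l). f a i * f a l)) + vec_space.rank n (mat n n (\<lambda>(i,l). \<Sum>\<alpha>\<in>S. f \<alpha> i * f \<alpha> l))"
    unfolding e by (rule vec_space.rank_subadditive) auto
  with r1 insert show ?case by simp
qed

lemma phi_prod:
  assumes "\<beta> \<ge> 0"
  shows "phi \<beta> d \<alpha> k * phi \<beta> d \<alpha> k' = (\<Prod>j<d. (\<beta> * (k$j * k'$j))^\<alpha> j / fact (\<alpha> j))"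
proof -
  have c: "1 / fact (mi_abs d \<alpha>) * multinom d \<alpha> * \<beta> ^ mi_abs d \<alpha> = (\<Prod>j<d. \<beta> ^ \<alpha> j / fact (\<alpha> j))"
    unfolding multinom_def mi_abs_def
    by (simp add: prod_dividef power_sum prod.distrib)
  have nn: "0 \<le> (\<Prod>j<d. \<beta> ^ \<alpha> j / fact (\<alpha> j))" using assms by (intro prod_nonneg) auto
  define C where "C = (\<Prod>j<d. \<beta> ^ \<alpha> j / fact (\<alpha> j))"
  have "phi \<beta> d \<alpha> k * phi \<beta> d \<alpha> k' = (sqrt C * sqrt C) * ((\<Prod>j<d. (k $ j) ^ \<alpha> j) * (\<Prod>j<d. (k' $ j) ^ \<alpha> j))"
    unfolding phi_def c C_def by (simp only: mult_ac)
  also have "sqrt C * sqrt C = C" using nn unfolding C_def by simp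
  also have "C * ((\<Prod>j<d. (k $ j) ^ \<alpha> j) * (\<Prod>j<d. (k' $ j) ^ \<alpha> j)) =
     (\<Prod>j<d. (\<beta> ^ \<alpha> j / fact (\<alpha> j)) * ((k $ j) ^ \<alpha> j * (k' $ j) ^ \<alpha> j))"
    unfolding C_def by (simp only: prod.distrib)
  also have "\<dots> = (\<Prod>j<d. (\<beta> * (k$j * k'$j))^\<alpha> j / fact (\<alpha> j))"
    by (intro prod.cong refl) (simp add: power_mult_distrib)
  finally show ?thesis .
qed

lemma taylor_entry:
  assumes K: "K \<in> carrier_mat n d" and b: "\<beta> \<ge> 0" and i: "i < n" and l: "l < n"
  shows "taylor_kernel \<beta> s K $$ (i,l) = (\<Sum>p\<le>s. (\<beta> * (row K i \<bullet> row K l))^p / fact p)"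
proof -
  have "taylor_kernel \<beta> s K $$ (i,l) = (\<Sum>\<alpha>\<in>multi_indices d s. \<Prod>j<d. (\<beta> * (row K i $j * row K l $j))^\<alpha> j / fact (\<alpha> j))"
    using K i l b unfolding taylor_kernel_def by (simp add: phi_prod)
  also have "\<dots> = (\<Sum>p\<le>s. (\<Sum>j<d. \<beta> * (row K i $j * row K l $j))^p / fact p)"
    by (rule taylor_mi)
  also have "(\<Sum>j<d. \<beta> * (row K i $j * row K l $j)) = \<beta> * (row K i \<bullet> row K l)"
    using K unfolding scalar_prod_def by (simp add: sum_distrib_left atLeast0LessThan)
  finally show ?thesis .
qed

lemma taylor_rank:
  assumes K: "K \<in> carrier_mat n d"
  shows "mat_rank (taylor_kernel \<beta> s K) \<le> (s + d) choose d"
proof -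
  have "mat_rank (taylor_kernel \<beta> s K) = vec_space.rank n (mat n n (\<lambda>(i,l). \<Sum>\<alpha>\<in>multi_indices d s.
      (\<lambda>\<alpha> i. phi \<beta> d \<alpha> (row K i)) \<alpha> i * (\<lambda>\<alpha> i. phi \<beta> d \<alpha> (row K i)) \<alpha> l))"
    using K unfolding mat_rank_def taylor_kernel_def by simp
  also have "\<dots> \<le> card (multi_indices d s)" by (rule rank_sum_rank1[OF mi_finite])
  finally show ?thesis by (simp add: mi_card)
qed



lemma hadamard_psd:
  fixes u :: "nat \<Rightarrow> real" and a :: "nat \<Rightarrow> nat \<Rightarrow> real"
  shows "0 \<le> (\<Sum>i\<in>I. \<Sum>l\<in>I. u i * u l * (\<Sum>j\<in>J. a i j * a l j)^q)"
proof (induction q arbitrary: u)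
  case 0
  have "(\<Sum>i\<in>I. \<Sum>l\<in>I. u i * u l * (\<Sum>j\<in>J. a i j * a l j)^0) = (\<Sum>i\<in>I. u i)^2"
    by (simp add: power2_eq_square sum_product)
  then show ?case by simp
next
  case (Suc q)
  define G where "G i l = (\<Sum>j\<in>J. a i j * a l j)" for i l
  have t: "u i * u l * G i l ^ Suc q = (\<Sum>j\<in>J. (u i * a i j) * (u l * a l j) * G i l ^ q)" for i l
  proof -
    have "u i * u l * G i l ^ Suc q = (\<Sum>j\<in>J. a i j * a l j) * (u i * u l * G i l ^ q)"
      unfolding power_Suc by (simp only: G_def[symmetric] mult_ac)
    also have "\<dots> = (\<Sum>j\<in>J. a i j * a l j * (u i * u l * G i l ^ q))"
      by (rule sum_distrib_right)
    also have "\<dots> = (\<Sum>j\<in>J. (u i * a i j) * (u l * a l j) * G i l ^ q)"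
      by (intro sum.cong refl) (simp only: mult_ac)
    finally show ?thesis .
  qed
  have "(\<Sum>i\<in>I. \<Sum>l\<in>I. u i * u l * (\<Sum>j\<in>J. a i j * a l j)^Suc q)
     = (\<Sum>i\<in>I. \<Sum>l\<in>I. \<Sum>j\<in>J. (u i * a i j) * (u l * a l j) * (\<Sum>j\<in>J. a i j * a l j)^q)"
    by (simp only: t[unfolded G_def])
  also have "\<dots> = (\<Sum>i\<in>I. \<Sum>j\<in>J. \<Sum>l\<in>I. (u i * a i j) * (u l * a l j) * (\<Sum>j\<in>J. a i j * a l j)^q)"
    by (rule sum.cong[OF refl], rule sum.swap)
  also have "\<dots> = (\<Sum>j\<in>J. \<Sum>i\<in>I. \<Sum>l\<in>I. (u i * a i j) * (u l * a l j) * (\<Sum>j\<in>J. a i j * a l j)^q)"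
    by (rule sum.swap)
  also have "\<dots> \<ge> 0"
  proof (rule sum_nonneg)
    fix j assume "j \<in> J"
    show "0 \<le> (\<Sum>i\<in>I. \<Sum>l\<in>I. (u i * a i j) * (u l * a l j) * (\<Sum>j\<in>J. a i j * a l j)^q)"
      by (rule Suc.IH[of "\<lambda>i. u i * a i j"])
  qed
  finally show ?case .
qed

lemma exp_tail_sums:
  fixes x :: real
  shows "(\<lambda>m. x^(m + Suc s) / fact (m + Suc s)) sums (exp x - (\<Sum>p\<le>s. x^p / fact p))"
proof -
  have "(\<lambda>n. x^n / fact n) sums exp x"
    using exp_converges[of x] by (simp add: divide_inverse mult.commute)
  from sums_split_initial_segment[OF this, of "Suc s"]
  show ?thesis by (simp add: lessThan_Suc_atMost)
qed

lemma quad_form: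
  fixes A :: "real mat"
  assumes "A \<in> carrier_mat n n" "x \<in> carrier_vec n"
  shows "x \<bullet> (A *\<^sub>v x) = (\<Sum>i<n. \<Sum>l<n. x$i * x$l * A$$(i,l))"
  using assms unfolding scalar_prod_def
  by (simp add: mult_mat_vec_def scalar_prod_def sum_distrib_left atLeast0LessThan algebra_simps)

lemma HT_sums:
  assumes K: "K \<in> carrier_mat n d" and b: "\<beta> \<ge> 0" and i: "i < n" and l: "l < n"
  shows "(\<lambda>m. (\<beta> * (row K i \<bullet> row K l))^(m + Suc s) / fact (m + Suc s)) sums
     ((exp_kernel \<beta> K - taylor_kernel \<beta> s K) $$ (i,l))"
proof -
  have "(exp_kernel \<beta> K - taylor_kernel \<beta> s K) $$ (i,l) = exp (\<beta> * (row K i \<bullet> row K l)) -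
     (\<Sum>p\<le>s. (\<beta> * (row K i \<bullet> row K l))^p / fact p)"
    using taylor_entry[OF K b i l, of s] K i l unfolding exp_kernel_def
    by (simp add: taylor_kernel_def)
  then show ?thesis using exp_tail_sums by simp
qed

lemma HT_psd:
  assumes K: "K \<in> carrier_mat n d" and b: "\<beta> \<ge> 0" and x: "x \<in> carrier_vec n"
  shows "0 \<le> x \<bullet> ((exp_kernel \<beta> K - taylor_kernel \<beta> s K) *\<^sub>v x)"
proof -
  let ?A = "exp_kernel \<beta> K - taylor_kernel \<beta> s K"
  let ?g = "\<lambda>i l. row K i \<bullet> row K l"
  have A: "?A \<in> carrier_mat n n" using K unfolding exp_kernel_def taylor_kernel_def by auto
  have g: "?g i l = (\<Sum>j<d. K$$(i,j) * K$$(l,j))" if "i < n" "l < n" for i l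
    using K that unfolding scalar_prod_def by (simp add: atLeast0LessThan)
  have "(\<lambda>m. \<Sum>i<n. \<Sum>l<n. x$i * x$l * ((\<beta> * ?g i l)^(m + Suc s) / fact (m + Suc s))) sums
     (\<Sum>i<n. \<Sum>l<n. x$i * x$l * ?A$$(i,l))"
    by (intro sums_sum sums_mult HT_sums[OF K b]) auto
  note S = this
  have NN: "0 \<le> (\<Sum>i<n. \<Sum>l<n. x$i * x$l * ((\<beta> * ?g i l)^(m + Suc s) / fact (m + Suc s)))" for m
  proof -
    have "(\<Sum>i<n. \<Sum>l<n. x$i * x$l * ((\<beta> * ?g i l)^(m + Suc s) / fact (m + Suc s))) =
       (\<beta>^(m + Suc s) / fact (m + Suc s)) * (\<Sum>i<n. \<Sum>l<n. x$i * x$l * (\<Sum>j<d. K$$(i,j) * K$$(l,j))^(m + Suc s))"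
    proof -
      have "(\<Sum>i<n. \<Sum>l<n. x$i * x$l * ((\<beta> * ?g i l)^(m + Suc s) / fact (m + Suc s))) =
        (\<Sum>i<n. \<Sum>l<n. (\<beta>^(m + Suc s) / fact (m + Suc s)) * (x$i * x$l * (\<Sum>j<d. K$$(i,j) * K$$(l,j))^(m + Suc s)))"
        by (intro sum.cong refl) (simp add: g power_mult_distrib)
      then show ?thesis by (simp add: sum_distrib_left)
    qed
    also have "\<dots> \<ge> 0" using b by (intro mult_nonneg_nonneg hadamard_psd) auto
    finally show ?thesis .
  qed
  have tot: "0 \<le> (\<Sum>i<n. \<Sum>l<n. x$i * x$l * ?A$$(i,l))"
    by (rule sums_le[OF NN sums_zero S])
  show ?thesis using quad_form[OF A x] tot by linarith
qed



interpretation ofr_poly: map_poly_inj_comm_ring_hom "complex_of_real" ..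

lemma sym_eig_real:
  fixes A :: "real mat"
  assumes A: "A \<in> carrier_mat n n" and sym: "\<And>i l. i < n \<Longrightarrow> l < n \<Longrightarrow> A $$ (i,l) = A $$ (l,i)"
    and ev: "eigenvector (map_mat complex_of_real A) v a"
  shows "Im a = 0"
proof -
  let ?Ac = "map_mat complex_of_real A"
  have v: "v \<in> carrier_vec n" and v0: "v \<noteq> 0\<^sub>v n" and e: "?Ac *\<^sub>v v = a \<cdot>\<^sub>v v"
    using ev A unfolding eigenvector_def by auto
  have ei: "(\<Sum>l<n. of_real (A $$ (i,l)) * v $ l) = a * v $ i" if "i < n" for i
  proof -
    have "(?Ac *\<^sub>v v) $ i = (a \<cdot>\<^sub>v v) $ i" using e by simp
    then show ?thesis using that A v unfolding mult_mat_vec_def scalar_prod_def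
      by (simp add: atLeast0LessThan)
  qed
  define S where "S = (\<Sum>i<n. \<Sum>l<n. cnj (v $ i) * of_real (A $$ (i,l)) * v $ l)"
  define N where "N = (\<Sum>i<n. (cmod (v $ i))^2)"
  have S1: "S = a * of_real N"
  proof -
    have "S = (\<Sum>i<n. cnj (v $ i) * (\<Sum>l<n. of_real (A $$ (i,l)) * v $ l))"
      unfolding S_def by (simp add: sum_distrib_left mult.assoc)
    also have "\<dots> = (\<Sum>i<n. a * (v $ i * cnj (v $ i)))"
      by (intro sum.cong refl) (simp add: ei)
    also have "\<dots> = a * of_real N"
    proof -
      have "\<And>i. v $ i * cnj (v $ i) = of_real ((cmod (v $ i))^2)" by (simp only: complex_norm_square)
      then show ?thesis unfolding N_def of_real_sum sum_distrib_left by (simp only:)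
    qed
    finally show ?thesis .
  qed
  have S2: "cnj S = S"
  proof -
    have "cnj S = (\<Sum>i<n. \<Sum>l<n. v $ i * of_real (A $$ (i,l)) * cnj (v $ l))"
      unfolding S_def by (simp add: cnj_sum)
    also have "\<dots> = (\<Sum>l<n. \<Sum>i<n. v $ i * of_real (A $$ (i,l)) * cnj (v $ l))"
      by (rule sum.swap)
    also have "\<dots> = S" unfolding S_def
      by (intro sum.cong refl) (simp add: sym mult.commute mult.left_commute)
    finally show ?thesis .
  qed
  have "N > 0"
  proof -
    from v0 v obtain i where i: "i < n" "v $ i \<noteq> 0" by (auto simp: vec_eq_iff)
    have "(cmod (v $ i))^2 \<le> N" unfolding N_def
      by (rule member_le_sum[where f = "\<lambda>i. (cmod (v $ i))^2"]) (use i in auto)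
    moreover have "(cmod (v $ i))^2 > 0" using i by simp
    ultimately show ?thesis by linarith
  qed
  have "cnj a * of_real N = a * of_real N" using S1 S2 by (metis complex_cnj_complex_of_real complex_cnj_mult)
  then have "cnj a = a" using \<open>N > 0\<close> by simp
  then show ?thesis by (metis Reals_cnj_iff complex_is_Real_iff)
qed

lemma sym_split:
  fixes A :: "real mat"
  assumes A: "A \<in> carrier_mat n n" and sym: "\<And>i l. i < n \<Longrightarrow> l < n \<Longrightarrow> A $$ (i,l) = A $$ (l,i)"
  shows "\<exists>es. char_poly A = (\<Prod>e\<leftarrow>es. [:- e, 1:])"
proof -
  let ?Ac = "map_mat complex_of_real A"
  have Ac: "?Ac \<in> carrier_mat n n" using A by simp
  obtain as where cp: "char_poly ?Ac = (\<Prod>a\<leftarrow>as. [:- a, 1:])"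
    using char_poly_factorized[OF Ac] by auto
  have re: "Im a = 0" if "a \<in> set as" for a
  proof -
    have "poly (char_poly ?Ac) a = 0" unfolding cp using that by (rule linear_poly_root)
    then have "eigenvalue ?Ac a" using eigenvalue_root_char_poly[OF Ac] by simp
    then obtain v where "eigenvector ?Ac v a" unfolding eigenvalue_def by auto
    then show ?thesis using sym_eig_real[OF A sym] by blast
  qed
  define es where "es = map Re as"
  have as: "as = map complex_of_real es" unfolding es_def using re
    by (induction as) (auto simp: complex_eq_iff)
  have "map_poly complex_of_real (char_poly A) = char_poly ?Ac"
    by (rule of_real_hom.char_poly_hom[OF A, symmetric])
  also have "\<dots> = map_poly complex_of_real (\<Prod>e\<leftarrow>es. [:- e, 1:])"
    unfolding cp as ofr_poly.hom_prod_list by (simp add: o_def)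
  finally show ?thesis by auto
qed



definition tr :: "real mat \<Rightarrow> real" where "tr A = (\<Sum>i<dim_row A. A $$ (i,i))"

lemma tr_comm: assumes "X \<in> carrier_mat n n" "Y \<in> carrier_mat n n"
  shows "tr (X * Y) = tr (Y * X)"
proof -
  have "tr (X * Y) = (\<Sum>i<n. \<Sum>k<n. X $$ (i,k) * Y $$ (k,i))"
    using assms unfolding tr_def by (simp add: scalar_prod_def atLeast0LessThan)
  also have "\<dots> = (\<Sum>k<n. \<Sum>i<n. Y $$ (k,i) * X $$ (i,k))"
    by (subst sum.swap) (simp add: mult.commute)
  also have "\<dots> = tr (Y * X)"
    using assms unfolding tr_def by (simp add: scalar_prod_def atLeast0LessThan)
  finally show ?thesis .
qed

lemma order_prod_linear:
  fixes bs :: "real list"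
  shows "Polynomial.order a (\<Prod>b\<leftarrow>bs. [:- b, 1:]) = count_list bs a"
proof (induction bs)
  case Nil then show ?case by (simp add: order_1)
next
  case (Cons b bs)
  have nz: "(\<Prod>b\<leftarrow>bs. [:- b, 1:]) \<noteq> (0 :: real poly)"
    by (auto simp: prod_list_zero_iff)
  have "Polynomial.order a ([:- b, 1:] * (\<Prod>b\<leftarrow>bs. [:- b, 1:])) =
     Polynomial.order a [:- b, 1:] + Polynomial.order a (\<Prod>b\<leftarrow>bs. [:- b, 1:])"
  proof (rule order_mult)
    have lin: "[:- b, 1:] \<noteq> (0::real poly)" by simp
    show "[:- b, 1:] * (\<Prod>b\<leftarrow>bs. [:- b, 1:]) \<noteq> 0" using nz lin by (metis mult_eq_0_iff)
  qed
  then show ?case using Cons by (simp add: order_linear')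
qed

lemma sum_list_map_count_gen:
  fixes f :: "'a \<Rightarrow> real"
  assumes "finite X" "set xs \<subseteq> X"
  shows "sum_list (map f xs) = (\<Sum>x\<in>X. real (count_list xs x) * f x)"
  using assms(2)
proof (induction xs)
  case Nil then show ?case by simp
next
  case (Cons y xs)
  have "(\<Sum>x\<in>X. real (count_list (y # xs) x) * f x) =
        (\<Sum>x\<in>X. (if y = x then f x else 0) + real (count_list xs x) * f x)"
    by (intro sum.cong refl) (simp add: distrib_right)
  also have "\<dots> = (\<Sum>x\<in>X. (if y = x then f x else 0)) + (\<Sum>x\<in>X. real (count_list xs x) * f x)"
    by (rule sum.distrib)
  also have "(\<Sum>x\<in>X. (if y = x then f x else 0)) = f y" using Cons.prems assms(1) by (simp add: sum.delta)
  finally show ?case using Cons by simp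
qed

lemma sum_list_map_count_real:
  fixes f :: "'a \<Rightarrow> real"
  shows "sum_list (map f xs) = (\<Sum>x\<in>set xs. real (count_list xs x) * f x)"
  by (rule sum_list_map_count_gen) auto

lemma sum_roots_prod_linear:
  fixes bs :: "real list"
  shows "(\<Sum>a\<in>{a. poly (\<Prod>b\<leftarrow>bs. [:- b, 1:]) a = 0}. real (Polynomial.order a (\<Prod>b\<leftarrow>bs. [:- b, 1:])) * f a)
     = sum_list (map f bs)"
proof -
  have "{a. poly (\<Prod>b\<leftarrow>bs. [:- b, 1:]) a = 0} = set bs"
    by (auto simp: poly_prod_list_zero_iff)
  then show ?thesis by (simp add: order_prod_linear sum_list_map_count_real)
qed



lemma eig_nonneg:
  fixes A :: "real mat"
  assumes A: "A \<in> carrier_mat n n" and psd: "\<And>x. x \<in> carrier_vec n \<Longrightarrow> 0 \<le> x \<bullet> (A *\<^sub>v x)"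
    and e: "eigenvalue A e"
  shows "e \<ge> 0"
proof -
  obtain v where ev: "eigenvector A v e" using e unfolding eigenvalue_def by auto
  have v: "v \<in> carrier_vec n" and v0: "v \<noteq> 0\<^sub>v n" and Av: "A *\<^sub>v v = e \<cdot>\<^sub>v v"
    using ev A unfolding eigenvector_def by auto
  have "0 \<le> v \<bullet> (A *\<^sub>v v)" using psd v by simp
  also have "v \<bullet> (A *\<^sub>v v) = e * (v \<bullet> v)" unfolding Av using v by simp
  finally have 1: "0 \<le> e * (v \<bullet> v)" .
  have "0 < v \<bullet>c v" using conjugate_square_greater_0_vec[OF v] v0 by simp
  then have 2: "0 < v \<bullet> v" by simp
  from 1 2 show ?thesis by (simp add: zero_le_mult_iff)
qed

lemma upper_tri_sq:
  fixes B :: "real mat"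
  assumes B: "B \<in> carrier_mat n n" and ut: "upper_triangular B"
  shows "upper_triangular (B * B)" "diag_mat (B * B) = map (\<lambda>i. (B $$ (i,i))^2) [0..<n]"
proof -
  have z: "B $$ (i,j) = 0" if "j < i" "i < n" for i j using ut B that unfolding upper_triangular_def by auto
  show "upper_triangular (B * B)" unfolding upper_triangular_def
  proof (intro allI impI)
    fix i j assume i: "i < dim_row (B * B)" and j: "j < i"
    have "(B * B) $$ (i,j) = (\<Sum>k<n. B $$ (i,k) * B $$ (k,j))"
      using i j B by (simp add: scalar_prod_def atLeast0LessThan)
    also have "\<dots> = 0"
    proof (intro sum.neutral ballI)
      fix k assume "k \<in> {..<n}"
      then show "B $$ (i,k) * B $$ (k,j) = 0" using z[of k i] z[of j k] i j B
        by (cases "k < i") auto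
    qed
    finally show "(B * B) $$ (i,j) = 0" .
  qed
  have "(B * B) $$ (i,i) = (B $$ (i,i))^2" if i: "i < n" for i
  proof -
    have "(B * B) $$ (i,i) = (\<Sum>k<n. B $$ (i,k) * B $$ (k,i))"
      using i B by (simp add: scalar_prod_def atLeast0LessThan)
    also have "\<dots> = B $$ (i,i) * B $$ (i,i) + (\<Sum>k\<in>{..<n} - {i}. B $$ (i,k) * B $$ (k,i))"
      by (rule sum.remove) (use i in auto)
    also have "(\<Sum>k\<in>{..<n} - {i}. B $$ (i,k) * B $$ (k,i)) = 0"
    proof (intro sum.neutral ballI)
      fix k assume "k \<in> {..<n} - {i}"
      then show "B $$ (i,k) * B $$ (k,i) = 0" using z[of k i] z[of i k] i
        by (cases "k < i") auto
    qed
    finally show ?thesis by (simp add: power2_eq_square)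
  qed
  then show "diag_mat (B * B) = map (\<lambda>i. (B $$ (i,i))^2) [0..<n]"
    using B unfolding diag_mat_def by auto
qed

lemma nuclear_psd:
  fixes A :: "real mat"
  assumes A: "A \<in> carrier_mat n n" and sym: "\<And>i l. i < n \<Longrightarrow> l < n \<Longrightarrow> A $$ (i,l) = A $$ (l,i)"
    and psd: "\<And>x. x \<in> carrier_vec n \<Longrightarrow> 0 \<le> x \<bullet> (A *\<^sub>v x)"
  shows "nuclear_norm A = tr A"
proof -
  obtain es where cp: "char_poly A = (\<Prod>e\<leftarrow>es. [:- e, 1:])" using sym_split[OF A sym] by auto
  obtain B P Q where sd: "schur_decomposition A es = (B,P,Q)" by (cases "schur_decomposition A es") auto
  from schur_decomposition[OF A cp sd]
  have sim: "similar_mat_wit A B P Q" and ut: "upper_triangular B" and dB: "diag_mat B = es" by auto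
  from similar_mat_witD2[OF A sim] have PQ: "P * Q = 1\<^sub>m n" and QP: "Q * P = 1\<^sub>m n"
    and AB: "A = P * B * Q" and B: "B \<in> carrier_mat n n" and P: "P \<in> carrier_mat n n"
    and Q: "Q \<in> carrier_mat n n" by auto
  have tA: "transpose_mat A = A" using A sym by (intro eq_matI) auto
  have AA: "A * A = P * (B * B) * Q"
  proof -
    have "A * A = P * B * (Q * P) * B * Q" unfolding AB using P B Q
      by (simp add: assoc_mult_mat[of _ n n _ n _ n])
    also have "\<dots> = P * (B * B) * Q" unfolding QP using P B Q
      by (simp add: assoc_mult_mat[of _ n n _ n _ n])
    finally show ?thesis .
  qed
  have "similar_mat_wit (A * A) (B * B) P Q"
    by (rule similar_mat_witI[OF PQ QP AA]) (use A B P Q in auto)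
  then have cpAA: "char_poly (A * A) = char_poly (B * B)"
    by (intro char_poly_similar) (auto simp: similar_mat_def)
  have BB: "B * B \<in> carrier_mat n n" using B by simp
  note utB = upper_tri_sq[OF B ut]
  define bs where "bs = map (\<lambda>i. (B $$ (i,i))^2) [0..<n]"
  have cpBB: "char_poly (A * A) = (\<Prod>b\<leftarrow>bs. [:- b, 1:])"
    unfolding cpAA bs_def using char_poly_upper_triangular[OF BB utB(1)] utB(2) by simp
  have AAc: "A * A \<in> carrier_mat n n" using A by simp
  have eig: "{a. eigenvalue (A * A) a} = {a. poly (\<Prod>b\<leftarrow>bs. [:- b, 1:]) a = 0}"
    using eigenvalue_root_char_poly[OF AAc] cpBB by auto
  have "nuclear_norm A = sum_list (map sqrt bs)"
    unfolding nuclear_norm_def Let_def tA eig cpBB by (rule sum_roots_prod_linear)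
  also have "\<dots> = (\<Sum>i<n. B $$ (i,i))"
  proof -
    have nn: "B $$ (i,i) \<ge> 0" if "i < n" for i
    proof -
      have "B $$ (i,i) \<in> set es" using dB[symmetric] that B unfolding diag_mat_def by auto
      then have "poly (char_poly A) (B $$ (i,i)) = 0" unfolding cp by (rule linear_poly_root)
      then have "eigenvalue A (B $$ (i,i))" using eigenvalue_root_char_poly[OF A] by simp
      then show ?thesis using eig_nonneg[OF A psd] by blast
    qed
    have "sum_list (map sqrt bs) = (\<Sum>i<n. sqrt ((B $$ (i,i))^2))"
      unfolding bs_def by (simp add: sum_list_sum_nth atLeast0LessThan)
    also have "\<dots> = (\<Sum>i<n. B $$ (i,i))" using nn by (intro sum.cong refl) simp
    finally show ?thesis .
  qed
  also have "\<dots> = tr B" unfolding tr_def using B by simp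
  also have "tr B = tr (Q * P * B)" unfolding QP using B by simp
  also have "\<dots> = tr (P * B * Q)"
  proof -
    have "tr (Q * P * B) = tr (Q * (P * B))" using Q P B by (simp add: assoc_mult_mat[of _ n n _ n _ n])
    also have "\<dots> = tr (P * B * Q)" by (rule tr_comm) (use Q P B in auto)
    finally show ?thesis .
  qed
  finally show ?thesis unfolding AB .
qed



lemma pow_fact_le_exp:
  fixes m :: nat
  shows "real m ^ m / fact m \<le> exp (real m)"
proof -
  obtain t where t: "exp (real m) = (\<Sum>k<Suc m. real m ^ k / fact k) + exp t / fact (Suc m) * real m ^ Suc m"
    using Maclaurin_exp_le[of "real m" "Suc m"] by auto
  have "real m ^ m / fact m \<le> (\<Sum>k<Suc m. real m ^ k / fact k)"
    by (rule member_le_sum[where f = "\<lambda>k. real m ^ k / fact k"]) auto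
  also have "\<dots> \<le> exp (real m)" unfolding t by simp
  finally show ?thesis .
qed

lemma tail_bound:
  fixes x X :: real
  assumes x: "0 \<le> x" "x \<le> X"
  shows "exp x - (\<Sum>p\<le>s. x^p / fact p) \<le> exp X * (exp 1 * X / real (s + 1)) ^ (s + 1)"
proof -
  obtain t where t: "\<bar>t\<bar> \<le> \<bar>x\<bar>" and e: "exp x = (\<Sum>p<Suc s. x^p / fact p) + exp t / fact (Suc s) * x ^ Suc s"
    using Maclaurin_exp_le[of x "Suc s"] by auto
  let ?m = "Suc s"
  have "exp x - (\<Sum>p\<le>s. x^p / fact p) = exp t / fact ?m * x ^ ?m"
    using e by (simp add: lessThan_Suc_atMost)
  also have "\<dots> \<le> exp X / fact ?m * X ^ ?m"
  proof (intro mult_mono divide_right_mono power_mono)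
    show "exp t \<le> exp X" using t x by simp
  qed (use x in auto)
  also have "\<dots> = exp X * (X ^ ?m / real ?m ^ ?m) * (real ?m ^ ?m / fact ?m)"
  proof -
    have gen: "\<And>c f y a::real. a \<noteq> 0 \<Longrightarrow> c / f * y = c * (y/a) * (a/f)" by (simp add: field_simps)
    show ?thesis by (rule gen) simp
  qed
  also have "\<dots> \<le> exp X * (X ^ ?m / real ?m ^ ?m) * exp (real ?m)"
    using x by (intro mult_left_mono pow_fact_le_exp) auto
  also have "\<dots> = exp X * (exp 1 * X / real (s + 1)) ^ (s + 1)"
  proof -
    have "exp (real ?m) = exp 1 ^ ?m" by (metis exp_of_nat_mult mult.right_neutral)
    then show ?thesis by (simp add: power_divide power_mult_distrib field_simps)
  qed
  finally show ?thesis .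
qed

lemma row_norm_le:
  assumes K: "K \<in> carrier_mat n d" and i: "i < n"
  shows "row K i \<bullet> row K i \<le> (norm_2_inf K)^2"
proof -
  let ?f = "\<lambda>i. sqrt (\<Sum>j<dim_col K. (K $$ (i,j))^2)"
  have "?f i \<le> norm_2_inf K" unfolding norm_2_inf_def using K i by (intro Max_ge) auto
  moreover have nn: "0 \<le> (\<Sum>j<dim_col K. (K $$ (i,j))^2)" by (rule sum_nonneg) simp
  then have "0 \<le> ?f i" by simp
  ultimately have "(?f i)^2 \<le> (norm_2_inf K)^2" by (rule power_mono)
  moreover have "(?f i)^2 = row K i \<bullet> row K i"
    using K i nn by (simp add: scalar_prod_def atLeast0LessThan power2_eq_square sum_nonneg)
  ultimately show ?thesis by simp
qed

theorem lemmaE2: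
  fixes K :: "real mat" and n d s :: nat and \<beta> :: real
  assumes "K \<in> carrier_mat n d" and "\<beta> > 0"
  shows "mat_rank (taylor_kernel \<beta> s K) \<le> (s + d) choose d
       \<and> loewner_le (taylor_kernel \<beta> s K) (exp_kernel \<beta> K)
       \<and> nuclear_norm (exp_kernel \<beta> K - taylor_kernel \<beta> s K)
         \<le> real n * exp (\<beta> * (norm_2_inf K)^2)
             * (exp 1 * \<beta> * (norm_2_inf K)^2 / real (s + 1)) ^ (s + 1)"
proof -
  have K: "K \<in> carrier_mat n d" using assms(1) .
  have b: "\<beta> \<ge> 0" using assms(2) by simp
  define H where "H = exp_kernel \<beta> K"
  define T where "T = taylor_kernel \<beta> s K"
  define A where "A = H - T"
  define R where "R = norm_2_inf K"
  define bound where "bound = exp (\<beta> * R^2) * (exp 1 * (\<beta> * R^2) / real (s + 1)) ^ (s + 1)"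
  have H: "H \<in> carrier_mat n n" using K unfolding H_def exp_kernel_def by auto
  have T: "T \<in> carrier_mat n n" using K unfolding T_def taylor_kernel_def by auto
  have A: "A \<in> carrier_mat n n" using H T unfolding A_def by auto
  have rk: "mat_rank T \<le> (s + d) choose d" unfolding T_def by (rule taylor_rank[OF K])
  have psd: "\<And>x. x \<in> carrier_vec n \<Longrightarrow> 0 \<le> x \<bullet> (A *\<^sub>v x)"
    unfolding A_def H_def T_def using HT_psd[OF K b] by blast
  have lw: "loewner_le T H" unfolding loewner_le_def using T H psd unfolding A_def by blast
  have Aent: "A $$ (i,l) = exp (\<beta> * (row K i \<bullet> row K l)) - (\<Sum>p\<le>s. (\<beta> * (row K i \<bullet> row K l))^p / fact p)"
    if "i < n" "l < n" for i l
    using that K taylor_entry[OF K b that, of s] H T unfolding A_def H_def T_def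
    by (simp add: exp_kernel_def)
  have sym: "\<And>i l. i < n \<Longrightarrow> l < n \<Longrightarrow> A $$ (i,l) = A $$ (l,i)"
  proof -
    fix i l assume il: "i < n" "l < n"
    have "row K i \<bullet> row K l = row K l \<bullet> row K i"
      using K il by (intro comm_scalar_prod[of _ d]) auto
    then show "A $$ (i,l) = A $$ (l,i)" using Aent[OF il] Aent[OF il(2) il(1)] by simp
  qed
  have nuc: "nuclear_norm A = tr A" using nuclear_psd[OF A sym psd] by blast
  have diag: "A $$ (i,i) \<le> bound" if i: "i < n" for i
  proof -
    let ?x = "\<beta> * (row K i \<bullet> row K i)"
    have "0 \<le> row K i \<bullet> row K i" using K i
      by (simp add: scalar_prod_def) (rule sum_nonneg, simp)
    then have x0: "0 \<le> ?x" using b by simp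
    have "?x \<le> \<beta> * R^2" unfolding R_def using row_norm_le[OF K i] b by (rule mult_left_mono)
    then show ?thesis unfolding Aent[OF i i] bound_def using tail_bound[OF x0] by blast
  qed
  have "tr A = (\<Sum>i<n. A $$ (i,i))" unfolding tr_def using A by simp
  also have "\<dots> \<le> real (card {..<n}) * bound" by (rule sum_bounded_above) (use diag in auto)
  finally have "nuclear_norm A \<le> real n * bound" using nuc by simp
  then have "nuclear_norm A \<le> real n * exp (\<beta> * (norm_2_inf K)^2)
             * (exp 1 * \<beta> * (norm_2_inf K)^2 / real (s + 1)) ^ (s + 1)"
    unfolding bound_def R_def by (simp add: mult.assoc)
  then show ?thesis using rk lw unfolding A_def H_def T_def by blast
qed

end
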